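(* For every non-empty $\mathscr P\subseteq\{1,\dots,N-1\}$, $$Z_{[-1,N+1]\setminus\mathscr P}(\mathbf 0)\le 2\pi N\,Z_{[-1,N+1]\setminus c(\mathscr P)}(\mathbf 0).$$
   Context: $\mathcal H_{[-1,N+1]}(\phi)=\sum_{k=0}^{N}\frac12(\phi_{k+1}+\phi_{k-1}-2\phi_k)^2$. For $\mathscr P\subseteq\{1,\dots,N-1\}$, $Z_{[-1,N+1]\setminus\mathscr P}(\mathbf 0)=\int e^{-\mathcal H_{[-1,N+1]}(\phi)}\prod_{k\in\{1,\dots,N-1\}\setminus\mathscr P}d\phi_k$, where $\phi_k=0$ for $k\in\mathscr P\cup\{-1,0,N,N+1\}$. For non-empty $\mathscr P$ with $p_*=\min\mathscr P$, $p^*=\max\mathscr P$, the correction is $c(\mathscr P)=\mathscr P\cup\{p_*+1,p^*-1\}$ (sites outside $\{1,\dots,N-1\}$ being already pinned to zero). *)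

theory Defs
  imports "HOL-Analysis.Analysis"
begin

definition pinned_field :: "int set \<Rightarrow> (int \<Rightarrow> real) \<Rightarrow> int \<Rightarrow> real" where
  "pinned_field F x k = (if k \<in> F then x k else 0)"

definition hamiltonian :: "nat \<Rightarrow> (int \<Rightarrow> real) \<Rightarrow> real" where
  "hamiltonian N \<phi> = (\<Sum>k\<in>{0..int N}. (1/2) * (\<phi> (k+1) + \<phi> (k-1) - 2 * \<phi> k)^2)"

definition free_sites :: "nat \<Rightarrow> int set \<Rightarrow> int set" where
  "free_sites N P = {1..int N - 1} - P"

definition partition_fn :: "nat \<Rightarrow> int set \<Rightarrow> ennreal" where
  "partition_fn N P =
     (\<integral>\<^sup>+ x. ennreal (exp (- hamiltonian N (pinned_field (free_sites N P) x)))
        \<partial>(PiM (free_sites N P) (\<lambda>_. lborel)))"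

definition correction :: "int set \<Rightarrow> int set" where
  "correction P = P \<union> {Min P + 1, Max P - 1}"

end

theory Submission imports Defs "HOL-Probability.Distributions" begin


definition ee :: "(int \<Rightarrow> real) \<Rightarrow> int \<Rightarrow> real" where
  "ee \<phi> k = \<phi> (k+1) + \<phi> (k-1) - 2 * \<phi> k"

definition BB :: "nat \<Rightarrow> (int \<Rightarrow> real) \<Rightarrow> (int \<Rightarrow> real) \<Rightarrow> real" where
  "BB N \<phi> \<psi> = (\<Sum>k\<in>{0..int N}. ee \<phi> k * ee \<psi> k)"

lemma ham_BB: "hamiltonian N \<phi> = BB N \<phi> \<phi> / 2"
  unfolding hamiltonian_def BB_def ee_def
  by (simp add: sum_divide_distrib power2_eq_square)

lemma ee_add: "ee (\<lambda>k. \<phi> k + \<psi> k) k = ee \<phi> k + ee \<psi> k"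
  unfolding ee_def by simp
lemma ee_scale: "ee (\<lambda>k. c * \<phi> k) k = c * ee \<phi> k"
  unfolding ee_def by (simp add: algebra_simps)

lemma BB_sym: "BB N \<phi> \<psi> = BB N \<psi> \<phi>"
  unfolding BB_def by (simp add: mult.commute)
lemma BB_add_left: "BB N (\<lambda>k. \<phi> k + \<psi> k) \<rho> = BB N \<phi> \<rho> + BB N \<psi> \<rho>"
  unfolding BB_def ee_add by (simp add: algebra_simps sum.distrib)
lemma BB_add_right: "BB N \<rho> (\<lambda>k. \<phi> k + \<psi> k) = BB N \<rho> \<phi> + BB N \<rho> \<psi>"
  unfolding BB_def ee_add by (simp add: algebra_simps sum.distrib)
lemma BB_scale_left: "BB N (\<lambda>k. c * \<phi> k) \<rho> = c * BB N \<phi> \<rho>"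
  unfolding BB_def ee_scale by (simp add: algebra_simps sum_distrib_left)
lemma BB_scale_right: "BB N \<rho> (\<lambda>k. c * \<phi> k) = c * BB N \<rho> \<phi>"
  unfolding BB_def ee_scale by (simp add: algebra_simps sum_distrib_left)
lemma BB_zero_left: "BB N (\<lambda>k. 0) \<rho> = 0"
  unfolding BB_def ee_def by simp
lemma BB_nonneg: "BB N \<phi> \<phi> \<ge> 0"
  unfolding BB_def by (auto intro: sum_nonneg)

lemma BB_posdef:
  assumes supp: "\<And>k. k \<notin> {1..int N - 1} \<Longrightarrow> w k = 0" and z: "BB N w w = 0"
  shows "w = (\<lambda>k. 0)"
proof -
  have e0: "ee w k = 0" if "k \<in> {0..int N}" for k
  proof -
    have "(\<Sum>k\<in>{0..int N}. ee w k * ee w k) = 0" using z by (simp add: BB_def)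
    hence "\<forall>k\<in>{0..int N}. ee w k * ee w k = 0"
      by (subst sum_nonneg_eq_0_iff[symmetric]) auto
    thus ?thesis using that by auto
  qed
  have "n \<le> N + 1 \<longrightarrow> w (int n) = 0 \<and> w (int n - 1) = 0" for n
  proof (induction n)
    case 0 show ?case using supp[of 0] supp[of "-1"] by auto
  next
    case (Suc n)
    show ?case
    proof
      assume "Suc n \<le> N + 1"
      hence h: "w (int n) = 0" "w (int n - 1) = 0" using Suc by auto
      have "ee w (int n) = 0" using e0 \<open>Suc n \<le> N + 1\<close> by auto
      hence "w (int n + 1) = 0" using h unfolding ee_def by simp
      thus "w (int (Suc n)) = 0 \<and> w (int (Suc n) - 1) = 0" using h by (simp add: add.commute)
    qed
  qed
  then show ?thesis
  proof -
    have "w k = 0" for k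
    proof (cases "k \<in> {1..int N - 1}")
      case True
      then have "k = int (nat k)" "nat k \<le> N + 1" by auto
      thus ?thesis using \<open>\<And>n. n \<le> N + 1 \<longrightarrow> _\<close> by metis
    qed (use supp in auto)
    thus ?thesis by auto
  qed
qed

lemma exists_orth:
  assumes "finite S" "S \<subseteq> {1..int N - 1}"
  shows "\<exists>t. (\<forall>k. k \<notin> S \<longrightarrow> t k = 0) \<and>
     (\<forall>u. (\<forall>k. k \<notin> S \<longrightarrow> u k = 0) \<longrightarrow> BB N u (\<lambda>k. \<phi>0 k + t k) = 0)"
  using assms
proof (induction S arbitrary: \<phi>0 rule: finite_induct)
  case empty
  show ?case
  proof (intro exI[of _ "\<lambda>k. 0"] conjI allI impI)
    fix u :: "int \<Rightarrow> real" assume "\<forall>k. k \<notin> {} \<longrightarrow> u k = 0"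
    hence "u = (\<lambda>k. 0)" by auto
    thus "BB N u (\<lambda>k. \<phi>0 k + 0) = 0" using BB_zero_left by simp
  qed auto
next
  case (insert i S)
  have SN: "S \<subseteq> {1..int N - 1}" using insert by auto
  obtain t0 where t0: "\<forall>k. k \<notin> S \<longrightarrow> t0 k = 0"
    "\<forall>u. (\<forall>k. k \<notin> S \<longrightarrow> u k = 0) \<longrightarrow> BB N u (\<lambda>k. \<phi>0 k + t0 k) = 0"
    using insert.IH[OF SN, of \<phi>0] by blast
  define \<delta> where "\<delta> = (\<lambda>k::int. if k = i then 1 else (0::real))"
  obtain t1 where t1: "\<forall>k. k \<notin> S \<longrightarrow> t1 k = 0"
    "\<forall>u. (\<forall>k. k \<notin> S \<longrightarrow> u k = 0) \<longrightarrow> BB N u (\<lambda>k. \<delta> k + t1 k) = 0"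
    using insert.IH[OF SN, of \<delta>] by blast
  define w where "w = (\<lambda>k. \<delta> k + t1 k)"
  have wi: "w i = 1" using t1(1) insert(2) by (simp add: w_def \<delta>_def)
  have wsupp: "k \<notin> {1..int N - 1} \<Longrightarrow> w k = 0" for k
    using t1(1) insert(4) by (auto simp: w_def \<delta>_def)
  have wpos: "BB N w w > 0"
  proof -
    have "BB N w w \<noteq> 0"
    proof
      assume "BB N w w = 0"
      hence "w = (\<lambda>k. 0)" using BB_posdef wsupp by blast
      thus False using wi by (metis zero_neq_one)
    qed
    thus ?thesis using BB_nonneg[of N w] by linarith
  qed
  have t1w: "BB N t1 w = 0" using t1 unfolding w_def by blast
  have dw: "BB N \<delta> w = BB N w w"
  proof -
    have "BB N w w = BB N \<delta> w + BB N t1 w" unfolding w_def[of] by (rule BB_add_left)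
    thus ?thesis using t1w by simp
  qed
  define s where "s = - BB N \<delta> (\<lambda>k. \<phi>0 k + t0 k) / BB N w w"
  define t where "t = (\<lambda>k. t0 k + s * w k)"
  show ?case
  proof (intro exI[of _ t] conjI allI impI)
    fix k assume "k \<notin> insert i S"
    thus "t k = 0" using t0(1) t1(1) by (auto simp: t_def w_def \<delta>_def)
  next
    fix u :: "int \<Rightarrow> real" assume u: "\<forall>k. k \<notin> insert i S \<longrightarrow> u k = 0"
    define u' where "u' = u(i := 0)"
    have u'S: "\<forall>k. k \<notin> S \<longrightarrow> u' k = 0" using u by (auto simp: u'_def)
    have ueq: "u = (\<lambda>k. u' k + u i * \<delta> k)" by (auto simp: u'_def \<delta>_def)
    have T: "(\<lambda>k. \<phi>0 k + t k) = (\<lambda>k. (\<phi>0 k + t0 k) + s * w k)" by (auto simp: t_def)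
    have a1: "BB N u' (\<lambda>k. \<phi>0 k + t0 k) = 0" using t0(2) u'S by blast
    have a2: "BB N u' w = 0" using t1(2) u'S unfolding w_def by blast
    have "BB N u (\<lambda>k. \<phi>0 k + t k)
        = BB N u' (\<lambda>k. \<phi>0 k + t0 k) + s * BB N u' w
          + u i * (BB N \<delta> (\<lambda>k. \<phi>0 k + t0 k) + s * BB N \<delta> w)"
      apply (subst ueq, subst T)
      by (simp only: BB_add_left BB_add_right BB_scale_left BB_scale_right) (simp add: algebra_simps)
    also have "\<dots> = 0" using a1 a2 dw wpos by (simp add: s_def)
    finally show "BB N u (\<lambda>k. \<phi>0 k + t k) = 0" .
  qed
qed

lemma prefix_sum:
  assumes "\<phi> 0 = 0" "\<phi> (-1) = 0"
  shows "\<phi> (int n) - \<phi> (int n - 1) = (\<Sum>k\<in>{0..int n - 1}. ee \<phi> k)"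
proof (induction n)
  case 0 thus ?case using assms by simp
next
  case (Suc n)
  have "{0..int (Suc n) - 1} = insert (int n) {0..int n - 1}" by auto
  hence "(\<Sum>k\<in>{0..int (Suc n) - 1}. ee \<phi> k) = ee \<phi> (int n) + (\<Sum>k\<in>{0..int n - 1}. ee \<phi> k)"
    by simp
  thus ?case using Suc by (simp add: ee_def algebra_simps)
qed

lemma suffix_sum:
  assumes "\<phi> (int N) = 0" "\<phi> (int N + 1) = 0"
  shows "\<phi> (int N + 1 - int n) - \<phi> (int N - int n) = - (\<Sum>k\<in>{int N + 1 - int n..int N}. ee \<phi> k)"
proof (induction n)
  case 0 thus ?case using assms by simp
next
  case (Suc n)
  have "{int N + 1 - int (Suc n)..int N} = insert (int N - int n) {int N + 1 - int n..int N}" by auto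
  hence "(\<Sum>k\<in>{int N + 1 - int (Suc n)..int N}. ee \<phi> k) = ee \<phi> (int N - int n) + (\<Sum>k\<in>{int N + 1 - int n..int N}. ee \<phi> k)"
    by simp
  thus ?case using Suc by (simp add: ee_def algebra_simps)
qed

lemma prefix_sum':
  assumes "\<phi> 0 = 0" "\<phi> (-1) = 0" "0 \<le> j"
  shows "\<phi> j - \<phi> (j - 1) = (\<Sum>k\<in>{0..j - 1}. ee \<phi> k)"
  using prefix_sum[OF assms(1,2), of "nat j"] assms(3) by simp

lemma suffix_sum':
  assumes "\<phi> (int N) = 0" "\<phi> (int N + 1) = 0" "j \<le> int N + 1"
  shows "\<phi> j - \<phi> (j - 1) = - (\<Sum>k\<in>{j..int N}. ee \<phi> k)"
  using suffix_sum[OF assms(1,2), of "nat (int N + 1 - j)"] assms(3) by simp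

lemma cs_int:
  "(\<Sum>k\<in>{a..b::int}. f k)\<^sup>2 \<le> real (nat (b - a + 1)) * (\<Sum>k\<in>{a..b}. (f k)\<^sup>2)"
  using sum_squared_le_sum_of_squares[of f "{a..b}"] by (simp add: mult.commute)

lemma sum_two_le: "(\<Sum>k\<in>{a,b}. (f k :: real)\<^sup>2) \<le> (f a)\<^sup>2 + (f b)\<^sup>2"
  by (cases "a = b") auto

lemma BB_eq_sq: "BB N \<phi> \<phi> = (\<Sum>k\<in>{0..int N}. (ee \<phi> k)\<^sup>2)"
  unfolding BB_def by (simp add: power2_eq_square)

lemma sob:
  assumes b: "\<phi> (-1) = 0" "\<phi> 0 = 0" "\<phi> (int N) = 0" "\<phi> (int N + 1) = 0"
    and pq: "\<phi> p = 0" "\<phi> q = 0" "1 \<le> p" "p \<le> q" "q \<le> int N - 1"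
  shows "(\<Sum>k\<in>{p+1,q-1}. (\<phi> k)\<^sup>2) \<le> real N * BB N \<phi> \<phi>"
proof -
  define E where "E k = (ee \<phi> k)\<^sup>2" for k
  have Enn: "E k \<ge> 0" for k by (simp add: E_def)
  have sub: "(\<Sum>k\<in>A. E k) + (\<Sum>k\<in>C. E k) \<le> BB N \<phi> \<phi>"
    if "A \<subseteq> {0..int N}" "C \<subseteq> {0..int N}" "A \<inter> C = {}" for A C
  proof -
    have fA: "finite A" "finite C" using that finite_subset by (auto intro: finite_subset[OF _ finite_atLeastAtMost_int])
    have "(\<Sum>k\<in>A. E k) + (\<Sum>k\<in>C. E k) = (\<Sum>k\<in>A \<union> C. E k)"
      using fA that(3) by (simp add: sum.union_disjoint)
    also have "\<dots> \<le> (\<Sum>k\<in>{0..int N}. E k)"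
      using that Enn by (intro sum_mono2) auto
    finally show ?thesis by (simp add: BB_eq_sq E_def)
  qed
  have le1: "(\<Sum>k\<in>{p+1,q-1}. (\<phi> k)\<^sup>2) \<le> (\<phi> (p+1))\<^sup>2 + (\<phi> (q-1))\<^sup>2" by (rule sum_two_le)
  show ?thesis
  proof (cases "p < q")
    case True
    have x1: "\<phi> (p+1) = (\<Sum>k\<in>{0..p}. ee \<phi> k)"
      using prefix_sum'[OF b(2,1), of "p+1"] pq by simp
    have x2: "\<phi> (q-1) = (\<Sum>k\<in>{q..int N}. ee \<phi> k)"
      using suffix_sum'[OF b(3,4), of q] pq by simp
    have y1: "(\<phi> (p+1))\<^sup>2 \<le> real N * (\<Sum>k\<in>{0..p}. E k)"
    proof -
      have "(\<phi> (p+1))\<^sup>2 \<le> real (nat (p - 0 + 1)) * (\<Sum>k\<in>{0..p}. E k)"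
        unfolding x1 E_def by (rule cs_int)
      also have "\<dots> \<le> real N * (\<Sum>k\<in>{0..p}. E k)"
        using pq by (intro mult_right_mono sum_nonneg Enn) auto
      finally show ?thesis .
    qed
    have y2: "(\<phi> (q-1))\<^sup>2 \<le> real N * (\<Sum>k\<in>{q..int N}. E k)"
    proof -
      have "(\<phi> (q-1))\<^sup>2 \<le> real (nat (int N - q + 1)) * (\<Sum>k\<in>{q..int N}. E k)"
        unfolding x2 E_def by (rule cs_int)
      also have "\<dots> \<le> real N * (\<Sum>k\<in>{q..int N}. E k)"
        using pq by (intro mult_right_mono sum_nonneg Enn) auto
      finally show ?thesis .
    qed
    have "(\<Sum>k\<in>{0..p}. E k) + (\<Sum>k\<in>{q..int N}. E k) \<le> BB N \<phi> \<phi>"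
      using True pq by (intro sub) auto
    hence "real N * ((\<Sum>k\<in>{0..p}. E k) + (\<Sum>k\<in>{q..int N}. E k)) \<le> real N * BB N \<phi> \<phi>"
      by (intro mult_left_mono) auto
    thus ?thesis using le1 y1 y2 by (simp add: algebra_simps)
  next
    case False
    hence qp: "q = p" using pq by auto
    have x1: "\<phi> (p+1) = - (\<Sum>k\<in>{p+1..int N}. ee \<phi> k)"
      using suffix_sum'[OF b(3,4), of "p+1"] pq by simp
    have x2: "\<phi> (p-1) = - (\<Sum>k\<in>{0..p-1}. ee \<phi> k)"
      using prefix_sum'[OF b(2,1), of p] pq by simp
    have y1: "(\<phi> (p+1))\<^sup>2 \<le> real N * (\<Sum>k\<in>{p+1..int N}. E k)"
    proof -
      have "(\<phi> (p+1))\<^sup>2 = (\<Sum>k\<in>{p+1..int N}. ee \<phi> k)\<^sup>2" unfolding x1 by simp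
      also have "\<dots> \<le> real (nat (int N - (p+1) + 1)) * (\<Sum>k\<in>{p+1..int N}. E k)"
        unfolding E_def by (rule cs_int)
      also have "\<dots> \<le> real N * (\<Sum>k\<in>{p+1..int N}. E k)"
        using pq by (intro mult_right_mono sum_nonneg Enn) auto
      finally show ?thesis .
    qed
    have y2: "(\<phi> (p-1))\<^sup>2 \<le> real N * (\<Sum>k\<in>{0..p-1}. E k)"
    proof -
      have "(\<phi> (p-1))\<^sup>2 = (\<Sum>k\<in>{0..p-1}. ee \<phi> k)\<^sup>2" unfolding x2 by simp
      also have "\<dots> \<le> real (nat (p - 1 - 0 + 1)) * (\<Sum>k\<in>{0..p-1}. E k)"
        unfolding E_def by (rule cs_int)
      also have "\<dots> \<le> real N * (\<Sum>k\<in>{0..p-1}. E k)"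
        using pq by (intro mult_right_mono sum_nonneg Enn) auto
      finally show ?thesis .
    qed
    have "(\<Sum>k\<in>{p+1..int N}. E k) + (\<Sum>k\<in>{0..p-1}. E k) \<le> BB N \<phi> \<phi>"
      using pq by (intro sub) auto
    hence "real N * ((\<Sum>k\<in>{p+1..int N}. E k) + (\<Sum>k\<in>{0..p-1}. E k)) \<le> real N * BB N \<phi> \<phi>"
      by (intro mult_left_mono) auto
    thus ?thesis using le1 y1 y2 qp by (simp add: algebra_simps)
  qed
qed



lemma psf: "product_sigma_finite (\<lambda>_::int. lborel :: real measure)"
  unfolding product_sigma_finite_def by (simp add: sigma_finite_lborel)

interpretation PL: product_sigma_finite "\<lambda>_::int. lborel :: real measure"
  by (rule psf)

lemma PiM_translate:
  fixes I :: "int set" and c :: "int \<Rightarrow> real"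
  assumes fin: "finite I"
  shows "distr (PiM I (\<lambda>_. lborel)) (PiM I (\<lambda>_. lborel)) (\<lambda>x. restrict (\<lambda>i. c i + x i) I)
         = PiM I (\<lambda>_. lborel)"
proof (rule PL.PiM_eqI[OF fin])
  show "sets (distr (PiM I (\<lambda>_. lborel)) (PiM I (\<lambda>_. lborel)) (\<lambda>x. restrict (\<lambda>i. c i + x i) I))
        = sets (PiM I (\<lambda>_. lborel))" by simp
next
  fix A assume A: "\<And>i. i \<in> I \<Longrightarrow> A i \<in> sets (lborel :: real measure)"
  have meas: "(\<lambda>x. restrict (\<lambda>i. c i + x i) I) \<in> measurable (PiM I (\<lambda>_. lborel)) (PiM I (\<lambda>_. lborel :: real measure))"
    by measurable
  have pre: "(\<lambda>x. restrict (\<lambda>i. c i + x i) I) -` PiE I A \<inter> space (PiM I (\<lambda>_. lborel))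
      = PiE I (\<lambda>i. (+) (c i) -` A i \<inter> space lborel)"
    by (auto simp: space_PiM PiE_def Pi_def extensional_def)
  have "emeasure (distr (PiM I (\<lambda>_. lborel)) (PiM I (\<lambda>_. lborel)) (\<lambda>x. restrict (\<lambda>i. c i + x i) I)) (PiE I A)
      = emeasure (PiM I (\<lambda>_. lborel)) (PiE I (\<lambda>i. (+) (c i) -` A i \<inter> space lborel))"
  proof -
    have "PiE I A \<in> sets (PiM I (\<lambda>_. lborel))" by (rule sets_PiM_I_finite[OF fin]) (use A in auto)
    thus ?thesis by (subst emeasure_distr[OF meas]) (auto simp: pre)
  qed
  also have "\<dots> = (\<Prod>i\<in>I. emeasure lborel ((+) (c i) -` A i \<inter> space lborel))"
  proof -
    have pm: "(+) (c i) -` A i \<in> sets borel" if "i \<in> I" for i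
    proof -
      have "(+) (c i) \<in> measurable borel (borel :: real measure)" by measurable
      from measurable_sets[OF this, of "A i"] A[OF that] show ?thesis by simp
    qed
    show ?thesis using pm by (subst PL.emeasure_PiM[OF fin]) auto
  qed
  also have "\<dots> = (\<Prod>i\<in>I. emeasure lborel (A i))"
  proof (rule prod.cong[OF refl])
    fix i assume "i \<in> I"
    have "emeasure lborel (A i) = emeasure (distr lborel borel ((+) (c i))) (A i)"
      by (simp add: lborel_distr_plus)
    also have "\<dots> = emeasure lborel ((+) (c i) -` A i \<inter> space lborel)"
      using A[OF \<open>i \<in> I\<close>] by (subst emeasure_distr) auto
    finally show "emeasure lborel ((+) (c i) -` A i \<inter> space lborel) = emeasure lborel (A i)" by simp
  qed
  finally show "emeasure (distr (PiM I (\<lambda>_. lborel)) (PiM I (\<lambda>_. lborel)) (\<lambda>x. restrict (\<lambda>i. c i + x i) I)) (PiE I A)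
      = (\<Prod>i\<in>I. emeasure lborel (A i))" .
qed

lemma nn_integral_PiM_translate:
  fixes I :: "int set" and c :: "int \<Rightarrow> real"
  assumes fin: "finite I" and g: "g \<in> borel_measurable (PiM I (\<lambda>_. lborel))"
  shows "(\<integral>\<^sup>+x. g (restrict (\<lambda>i. c i + x i) I) \<partial>PiM I (\<lambda>_. lborel)) = (\<integral>\<^sup>+x. g x \<partial>PiM I (\<lambda>_. lborel))"
proof -
  have meas: "(\<lambda>x. restrict (\<lambda>i. c i + x i) I) \<in> measurable (PiM I (\<lambda>_. lborel)) (PiM I (\<lambda>_. lborel :: real measure))"
    by measurable
  have "(\<integral>\<^sup>+x. g x \<partial>PiM I (\<lambda>_. lborel)) = (\<integral>\<^sup>+x. g x \<partial>distr (PiM I (\<lambda>_. lborel)) (PiM I (\<lambda>_. lborel)) (\<lambda>x. restrict (\<lambda>i. c i + x i) I))"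
    by (simp add: PiM_translate[OF fin])
  also have "\<dots> = (\<integral>\<^sup>+x. g (restrict (\<lambda>i. c i + x i) I) \<partial>PiM I (\<lambda>_. lborel))"
    using g by (subst nn_integral_distr[OF meas]) (auto simp: PiM_translate[OF fin])
  finally show ?thesis by simp
qed

lemma pinned_meas:
  "(\<lambda>x. pinned_field S x k + c) \<in> borel_measurable (PiM S (\<lambda>_. lborel :: real measure))"
proof (cases "k \<in> S")
  case True
  have "(\<lambda>x. x k) \<in> borel_measurable (PiM S (\<lambda>_. lborel :: real measure))"
    using True by (rule measurable_component_singleton[THEN measurable_compose]) simp
  thus ?thesis using True by (simp add: pinned_field_def)
qed (simp add: pinned_field_def)

lemma ham_meas:
  "(\<lambda>x. hamiltonian N (\<lambda>k. pinned_field S x k + c k)) \<in> borel_measurable (PiM S (\<lambda>_. lborel :: real measure))"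
  unfolding hamiltonian_def
  by (intro borel_measurable_sum borel_measurable_times borel_measurable_power borel_measurable_add
      borel_measurable_diff borel_measurable_const pinned_meas)

lemma gauss:
  assumes "N > 0"
  shows "(\<integral>\<^sup>+v. ennreal (exp (- v\<^sup>2 / (2 * real N))) \<partial>lborel) = ennreal (sqrt (2 * pi * real N))"
proof -
  let ?s = "sqrt (real N)"
  have nd: "normal_density 0 ?s v = 1 / sqrt (2 * pi * real N) * exp (- v\<^sup>2 / (2 * real N))" for v
    unfolding normal_density_def by simp
  have "(\<integral>\<^sup>+v. ennreal (normal_density 0 ?s v) \<partial>lborel) = ennreal 1"
  proof -
    have pos: "0 < ?s" using assms by simp
    show ?thesis
      by (subst nn_integral_eq_integral) (auto intro!: integrable_normal_density[OF pos] simp: integral_normal_density[OF pos])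
  qed
  moreover have "(\<integral>\<^sup>+v. ennreal (exp (- v\<^sup>2 / (2 * real N))) \<partial>lborel)
      = (\<integral>\<^sup>+v. ennreal (sqrt (2 * pi * real N)) * ennreal (normal_density 0 ?s v) \<partial>lborel)"
    using assms by (intro nn_integral_cong) (simp add: nd ennreal_mult[symmetric])
  moreover have "\<dots> = ennreal (sqrt (2 * pi * real N)) * (\<integral>\<^sup>+v. ennreal (normal_density 0 ?s v) \<partial>lborel)"
    by (rule nn_integral_cmult) simp
  ultimately show ?thesis by simp
qed



lemma H_split:
  assumes "BB N u T = 0"
  shows "hamiltonian N (\<lambda>k. u k + T k) = hamiltonian N u + hamiltonian N T"
proof -
  have "BB N (\<lambda>k. u k + T k) (\<lambda>k. u k + T k) = BB N u u + BB N u T + BB N T u + BB N T T"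
    by (simp add: BB_add_left BB_add_right)
  thus ?thesis using assms BB_sym[of N T u] by (simp add: ham_BB)
qed

theorem lemma3p11:
  fixes N :: nat and P :: "int set"
  assumes "P \<noteq> {}" and "P \<subseteq> {1..int N - 1}"
  shows "partition_fn N P \<le> ennreal (2 * pi * real N) * partition_fn N (correction P)"
proof -
  define p where "p = Min P"
  define q where "q = Max P"
  have finP: "finite P" using assms(2) finite_subset by blast
  have pP: "p \<in> P" and qP: "q \<in> P" using finP assms(1) by (auto simp: p_def q_def)
  have pq: "1 \<le> p" "p \<le> q" "q \<le> int N - 1"
    using pP qP assms(2) finP by (auto simp: p_def q_def)
  have Npos: "N > 0" using pq by linarith
  define F where "F = free_sites N P"
  define F' where "F' = free_sites N (correction P)"
  define Y where "Y = F - F'"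
  have finF: "finite F" "finite F'" "finite Y" by (auto simp: F_def F'_def Y_def free_sites_def)
  have F'F: "F' \<subseteq> F" by (auto simp: F_def F'_def free_sites_def correction_def)
  have FU: "F = Y \<union> F'" "Y \<inter> F' = {}" using F'F by (auto simp: Y_def)
  have Ysub: "Y \<subseteq> {p+1, q-1}"
    by (auto simp: Y_def F_def F'_def free_sites_def correction_def p_def q_def)
  have F'N: "F' \<subseteq> {1..int N - 1}" by (auto simp: F'_def free_sites_def)
  have Fout: "k \<notin> F" if "k \<in> {-1, 0, int N, int N + 1, p, q}" for k
    using that pP qP by (auto simp: F_def free_sites_def)
  let ?M = "\<lambda>S. PiM S (\<lambda>_::int. lborel :: real measure)"
  define ZQ where "ZQ = partition_fn N (correction P)"
  have ZQ_def': "ZQ = (\<integral>\<^sup>+x. ennreal (exp (- hamiltonian N (pinned_field F' x))) \<partial>?M F')"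
    by (simp add: ZQ_def partition_fn_def F'_def)
  define f where "f x = ennreal (exp (- hamiltonian N (pinned_field F x)))" for x
  have fmeas: "f \<in> borel_measurable (?M (Y \<union> F'))"
  proof -
    have "(\<lambda>x. hamiltonian N (\<lambda>k. pinned_field F x k + 0)) \<in> borel_measurable (?M F)"
      by (rule ham_meas)
    thus ?thesis unfolding f_def FU(1)[symmetric] by simp
  qed
  have "partition_fn N P = (\<integral>\<^sup>+x. f x \<partial>?M (Y \<union> F'))"
    by (simp add: partition_fn_def f_def F_def[symmetric] FU(1)[symmetric])
  also have "\<dots> = (\<integral>\<^sup>+y. (\<integral>\<^sup>+x. f (merge Y F' (y, x)) \<partial>?M F') \<partial>?M Y)"
    by (rule PL.product_nn_integral_fold[OF FU(2) finF(3) finF(2) fmeas])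
  also have "\<dots> \<le> (\<integral>\<^sup>+y. ennreal (exp (- (\<Sum>k\<in>Y. (y k)\<^sup>2) / (2 * real N))) * ZQ \<partial>?M Y)"
  proof (rule nn_integral_mono)
    fix y :: "int \<Rightarrow> real"
    define \<phi>0 where "\<phi>0 = pinned_field Y y"
    obtain t where t: "\<forall>k. k \<notin> F' \<longrightarrow> t k = 0"
      "\<forall>u. (\<forall>k. k \<notin> F' \<longrightarrow> u k = 0) \<longrightarrow> BB N u (\<lambda>k. \<phi>0 k + t k) = 0"
      using exists_orth[OF finF(2) F'N, of \<phi>0] by blast
    define T where "T = (\<lambda>k. \<phi>0 k + t k)"
    define g where "g x = ennreal (exp (- hamiltonian N (\<lambda>k. pinned_field F' x k + \<phi>0 k)))" for x
    have gmeas: "g \<in> borel_measurable (?M F')" unfolding g_def by (intro measurable_compose[OF ham_meas]) simp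
    have merge_eq: "f (merge Y F' (y, x)) = g x" for x
    proof -
      have "pinned_field F (merge Y F' (y, x)) = (\<lambda>k. pinned_field F' x k + \<phi>0 k)"
        using FU by (auto simp: pinned_field_def merge_def \<phi>0_def fun_eq_iff)
      thus ?thesis by (simp add: f_def g_def)
    qed
    have HT: "(\<Sum>k\<in>Y. (y k)\<^sup>2) / (2 * real N) \<le> hamiltonian N T"
    proof -
      have Tz: "T k = 0" if "k \<notin> F" for k using that t(1) F'F FU
        by (auto simp: T_def \<phi>0_def pinned_field_def)
      have TY: "T k = y k" if "k \<in> Y" for k using that t(1) FU
        by (auto simp: T_def \<phi>0_def pinned_field_def)
      have "(\<Sum>k\<in>Y. (y k)\<^sup>2) = (\<Sum>k\<in>Y. (T k)\<^sup>2)" using TY by simp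
      also have "\<dots> \<le> (\<Sum>k\<in>{p+1,q-1}. (T k)\<^sup>2)" using Ysub by (intro sum_mono2) auto
      also have "\<dots> \<le> real N * BB N T T"
        using Fout by (intro sob pq Tz) auto
      finally show ?thesis using Npos by (simp add: ham_BB field_simps)
    qed
    have "(\<integral>\<^sup>+x. f (merge Y F' (y, x)) \<partial>?M F') = (\<integral>\<^sup>+x. g x \<partial>?M F')"
      by (simp add: merge_eq)
    also have "\<dots> = (\<integral>\<^sup>+x. g (restrict (\<lambda>i. t i + x i) F') \<partial>?M F')"
      by (rule nn_integral_PiM_translate[OF finF(2) gmeas, symmetric])
    also have "\<dots> = (\<integral>\<^sup>+x. ennreal (exp (- hamiltonian N (pinned_field F' x))) * ennreal (exp (- hamiltonian N T)) \<partial>?M F')"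
    proof (rule nn_integral_cong)
      fix x
      have eq: "(\<lambda>k. pinned_field F' (restrict (\<lambda>i. t i + x i) F') k + \<phi>0 k) = (\<lambda>k. pinned_field F' x k + T k)"
        using t(1) by (auto simp: pinned_field_def T_def fun_eq_iff)
      have "BB N (pinned_field F' x) T = 0" using t(2) by (auto simp: T_def pinned_field_def)
      hence "hamiltonian N (\<lambda>k. pinned_field F' x k + T k) = hamiltonian N (pinned_field F' x) + hamiltonian N T"
        by (rule H_split)
      thus "g (restrict (\<lambda>i. t i + x i) F') = ennreal (exp (- hamiltonian N (pinned_field F' x))) * ennreal (exp (- hamiltonian N T))"
        unfolding g_def eq by (simp add: ennreal_mult[symmetric] exp_add[symmetric])
    qed
    also have "\<dots> = ennreal (exp (- hamiltonian N T)) * ZQ"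
      unfolding ZQ_def' by (subst nn_integral_multc) (auto intro!: measurable_compose[OF ham_meas[of N F' "\<lambda>_. 0", simplified]] simp: mult.commute)
    also have "\<dots> \<le> ennreal (exp (- (\<Sum>k\<in>Y. (y k)\<^sup>2) / (2 * real N))) * ZQ"
      using HT by (intro mult_right_mono ennreal_leI) auto
    finally show "(\<integral>\<^sup>+x. f (merge Y F' (y, x)) \<partial>?M F') \<le> ennreal (exp (- (\<Sum>k\<in>Y. (y k)\<^sup>2) / (2 * real N))) * ZQ" .
  qed
  also have "\<dots> = (\<integral>\<^sup>+y. (\<Prod>k\<in>Y. ennreal (exp (- (y k)\<^sup>2 / (2 * real N)))) \<partial>?M Y) * ZQ"
  proof -
    have e: "ennreal (exp (- (\<Sum>k\<in>Y. (y k)\<^sup>2) / (2 * real N))) = (\<Prod>k\<in>Y. ennreal (exp (- (y k)\<^sup>2 / (2 * real N))))" for y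
    proof -
      have "exp (- (\<Sum>k\<in>Y. (y k)\<^sup>2) / (2 * real N)) = exp (\<Sum>k\<in>Y. - ((y k)\<^sup>2 / (2 * real N)))"
        by (simp add: sum_divide_distrib sum_negf)
      also have "\<dots> = (\<Prod>k\<in>Y. exp (- ((y k)\<^sup>2 / (2 * real N))))" by (rule exp_sum[OF finF(3)])
      finally show ?thesis by (simp add: prod_ennreal)
    qed
    show ?thesis unfolding e
      by (rule nn_integral_multc) (intro borel_measurable_prod_ennreal measurable_compose[OF measurable_component_singleton]; simp)
  qed
  also have "\<dots> = (\<Prod>k\<in>Y. ennreal (sqrt (2 * pi * real N))) * ZQ"
    using gauss[OF Npos] by (subst PL.product_nn_integral_prod[OF finF(3)]) auto
  also have "\<dots> \<le> ennreal (2 * pi * real N) * ZQ"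
  proof (rule mult_right_mono)
    have c2: "card {p+1, q-1} \<le> 2" by (cases "p+1 = q-1") (simp_all add: card_insert_if)
    have c: "card Y \<le> 2" using card_mono[OF _ Ysub] c2 by simp
    have "1 \<le> real N" using Npos by simp
    hence "1 \<le> 2 * pi * real N" using pi_gt3 by (metis mult_le_cancel_right1 mult_less_cancel_right2 less_eq_real_def
      less_le_trans linorder_not_less mult.commute mult_left_le one_le_numeral pi_ge_two mult_mono' zero_le_one order.trans mult_le_one)
    hence s1: "1 \<le> sqrt (2 * pi * real N)" by (simp add: real_le_rsqrt)
    have "(\<Prod>k\<in>Y. sqrt (2 * pi * real N)) = sqrt (2 * pi * real N) ^ card Y" by simp
    also have "\<dots> \<le> sqrt (2 * pi * real N) ^ 2" using c s1 by (intro power_increasing) auto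
    also have "\<dots> = 2 * pi * real N" by simp
    finally have "(\<Prod>k\<in>Y. sqrt (2 * pi * real N)) \<le> 2 * pi * real N" .
    note h = this
    have "(\<Prod>k\<in>Y. ennreal (sqrt (2 * pi * real N))) = ennreal (\<Prod>k\<in>Y. sqrt (2 * pi * real N))"
      by (rule prod_ennreal) simp
    also have "\<dots> \<le> ennreal (2 * pi * real N)" using h by (rule ennreal_leI)
    finally show "(\<Prod>k\<in>Y. ennreal (sqrt (2 * pi * real N))) \<le> ennreal (2 * pi * real N)" .
  qed simp
  finally show ?thesis by (simp add: ZQ_def)
qed

end
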